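(* Let $\lambda=(\lambda_1\ge\dots\ge\lambda_N)$ be a dominant coweight of $\operatorname{GL}(N)$, $|\lambda|=\sum_i\lambda_i$, $n(\lambda)=\sum_{i=1}^N(i-1)\lambda_i$. Consider the power series $$P_\lambda(t)=\sum_{\vec\lambda}t^{2\Delta(\lambda,\vec\lambda)}\prod_{j=1}^{N-1}P_{\operatorname{GL}(N-j)}(t;\lambda^j),$$ summed over tuples $\vec\lambda=(\lambda^1,\dots,\lambda^{N-1})$ with $\lambda^j$ a dominant coweight of $\operatorname{GL}(N-j)$, where, with $\lambda^0:=\lambda$, $$2\Delta(\lambda,\vec\lambda)=\sum_{j=1}^{N-1}\sum_{i,i'}|\lambda^{j-1}_i-\lambda^j_{i'}|-2\sum_{j=1}^{N-1}\sum_{i<i'}|\lambda^j_i-\lambda^j_{i'}|,$$ and $P_{\operatorname{GL}(n)}(t;\mu)=\prod_k\prod_{s=1}^{m_k}(1-t^{2s})^{-1}$, $m_k$ being the multiplicities of the distinct entries of $\mu$. Then $P_\lambda(t)\in t^{(N-1)|\lambda|-2n(\lambda)}\mathbb Z[[t]]$, and the coefficient of $t^{(N-1)|\lambda|-2n(\lambda)}$ equals $\dim V^\lambda$, the dimension of the irreducible $\operatorname{GL}(N)$-module of highest weight $\lambda$. (Equivalently, the costalk $H^{G_{\mathcal O}}_*(\tilde{\mathcal R}^\lambda)$ of the type $A_{N-1}$ theory, with the modified grading whose Hilbert series is $P_\lambda$, lives in degrees $\ge\dim\mathrm{Gr}^\lambda_{\operatorname{PGL}(N)}$ and its lowest component has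 dimension $\dim V^\lambda$.)
   Context: $P_{\operatorname{GL}(n)}(t;\mu)$ is the Poincaré series of $H^*_{\operatorname{Stab}_{\operatorname{GL}(n)}(\mu)}(\mathrm{pt})$. $(N-1)|\lambda|-2n(\lambda)=\langle2\rho^\vee,\lambda\rangle=\dim\mathrm{Gr}^\lambda_{\operatorname{PGL}(N)}$. The series $P_\lambda(t)$ is the (modified) monopole formula for the costalk at $\lambda$ of the type $A_{N-1}$ quiver gauge theory with $\dim V=(N-1,\dots,1)$, $\dim W=(N,0,\dots,0)$. *)

theory Defs
  imports "HOL-Computational_Algebra.Formal_Power_Series"
begin

definition dominant :: "nat \<Rightarrow> int list \<Rightarrow> bool" where
  "dominant n mu \<longleftrightarrow> length mu = n \<and> sorted_wrt (\<ge>) mu"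

text \<open>Poincare series of the equivariant cohomology of a point for the stabiliser
  of mu in GL(n): product over distinct entries with multiplicity m of
  prod_{s=1}^m (1 - t^(2s))^(-1).\<close>
definition P_GL :: "int list \<Rightarrow> rat fps" where
  "P_GL mu = (\<Prod>v\<in>set mu. \<Prod>s\<in>{1..count (mset mu) v}. inverse (1 - fps_X ^ (2 * s)))"

text \<open>Tuples (lambda^1,...,lambda^(N-1)), lambda^j (stored at index j-1) a dominant
  coweight of GL(N-j).\<close>
definition tuples :: "nat \<Rightarrow> int list list set" where
  "tuples N = {ls. length ls = N - 1 \<and> (\<forall>j\<in>{1..N-1}. dominant (N - j) (ls ! (j - 1)))}"

definition twoDelta :: "int list \<Rightarrow> int list list \<Rightarrow> int" where
  "twoDelta lam ls = (let N = length lam; L = (\<lambda>j. (lam # ls) ! j) in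
     (\<Sum>j\<in>{1..N-1}. \<Sum>i<N-j+1. \<Sum>i'<N-j. \<bar>L (j-1) ! i - L j ! i'\<bar>)
     - 2 * (\<Sum>j\<in>{1..N-1}. \<Sum>i<N-j. \<Sum>i'<N-j. if i < i' then \<bar>L j ! i - L j ! i'\<bar> else 0))"

text \<open>Coefficient of t^k in P_lambda(t) (k an integer exponent): sum over all tuples
  of t^(2 Delta) times the product of Poincare series; only tuples with 2 Delta \<le> k
  contribute. (This is the genuine coefficient when that set of tuples is finite.)\<close>
definition P_coeff :: "int list \<Rightarrow> int \<Rightarrow> rat" where
  "P_coeff lam k = (let N = length lam in
     \<Sum>ls\<in>{ls\<in>tuples N. twoDelta lam ls \<le> k}.
        fps_nth (\<Prod>j\<in>{1..N-1}. P_GL (ls ! (j - 1))) (nat (k - twoDelta lam ls)))"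

definition size_cw :: "int list \<Rightarrow> int" where
  "size_cw lam = sum_list lam"

definition n_cw :: "int list \<Rightarrow> int" where
  "n_cw lam = (\<Sum>i<length lam. int i * lam ! i)"

text \<open>Dimension of the irreducible GL(N)-module of highest weight lambda
  (Weyl dimension formula).\<close>
definition dimV :: "int list \<Rightarrow> rat" where
  "dimV lam = (let N = length lam in
     \<Prod>j<N. \<Prod>i<j. of_int (lam ! i - lam ! j + int j - int i) / of_int (int j - int i))"

end

theory Submission
  imports Defs "Jordan_Normal_Form.Determinant"
begin

lemma mult_entry:
  assumes "A \<in> carrier_mat n m" "B \<in> carrier_mat m k" "i < n" "j < k"
  shows "(A * B) $$ (i,j) = (\<Sum>l<m. A $$ (i,l) * B $$ (l,j))"
  using assms by (simp add: scalar_prod_def row_def col_def atLeast0LessThan)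

lemma det_scale:
  fixes u v :: "nat \<Rightarrow> 'a::comm_ring_1"
  shows "det (mat n n (\<lambda>(i,k). u i * v k * f i k)) =
     (\<Prod>i<n. u i) * (\<Prod>k<n. v k) * det (mat n n (\<lambda>(i,k). f i k))"
proof -
  have "det (mat n n (\<lambda>(i,k). u i * v k * f i k)) =
    (\<Sum>p\<in>{p. p permutes {0..<n}}. signof p * (\<Prod>i = 0..<n. u i * v (p i) * f i (p i)))"
    by (subst det_def'[of _ n]) (auto intro!: sum.cong prod.cong simp: permutes_in_image)
  also have "\<dots> = (\<Sum>p\<in>{p. p permutes {0..<n}}. (\<Prod>i<n. u i) * (\<Prod>k<n. v k) *
      (signof p * (\<Prod>i = 0..<n. f i (p i))))"
  proof (rule sum.cong[OF refl])
    fix p assume "p \<in> {p. p permutes {0..<n}}"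
    hence p: "p permutes {0..<n}" by simp
    have "(\<Prod>i = 0..<n. v (p i)) = (\<Prod>k = 0..<n. v k)"
      using prod.permute[OF p, of v] by (simp add: comp_def)
    thus "signof p * (\<Prod>i = 0..<n. u i * v (p i) * f i (p i)) =
      (\<Prod>i<n. u i) * (\<Prod>k<n. v k) * (signof p * (\<Prod>i = 0..<n. f i (p i)))"
      by (simp add: prod.distrib atLeast0LessThan ac_simps)
  qed
  also have "\<dots> = (\<Prod>i<n. u i) * (\<Prod>k<n. v k) * det (mat n n (\<lambda>(i,k). f i k))"
    by (subst det_def'[of _ n]) (auto simp: sum_distrib_left intro!: sum.cong prod.cong simp: permutes_in_image)
  finally show ?thesis .
qed

definition Bm :: "nat \<Rightarrow> (nat \<Rightarrow> int) \<Rightarrow> rat mat" where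
  "Bm n y = mat n n (\<lambda>(i,k). of_int (y i) gchoose k)"

lemma prod_sum_fact: "(\<Prod>i<j. of_int (int j - int i) :: rat) = fact j"
proof (induction j)
  case 0 then show ?case by simp
next
  case (Suc j)
  have "(\<Prod>i<Suc j. of_int (int (Suc j) - int i) :: rat) =
      of_int (int (Suc j) - 0) * (\<Prod>i<j. of_int (int (Suc j) - int (Suc i)))"
    by (subst prod.lessThan_Suc_shift) simp
  also have "(\<Prod>i<j. of_int (int (Suc j) - int (Suc i)) :: rat) = (\<Prod>i<j. of_int (int j - int i))"
    by (intro prod.cong) auto
  finally show ?case using Suc by (simp add: fact_Suc)
qed

lemma vdm_binom:
  "det (Bm n y) = (\<Prod>j<n. \<Prod>i<j. of_int (y j - y i)) / (\<Prod>j<n. fact j)"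
proof (induction n arbitrary: y)
  case 0
  then show ?case by (simp add: Bm_def)
next
  case (Suc n)
  define C :: "rat mat" where "C = mat (Suc n) (Suc n) (\<lambda>(j,k). if j \<le> k then of_int (- y 0) gchoose (k - j) else 0)"
  have Cc: "C \<in> carrier_mat (Suc n) (Suc n)" by (simp add: C_def)
  have Bc: "Bm (Suc n) y \<in> carrier_mat (Suc n) (Suc n)" by (simp add: Bm_def)
  have detC: "det C = 1"
    by (subst det_upper_triangular[OF _ Cc]) (auto simp: upper_triangular_def C_def prod_list_diag_prod)
  define H :: "rat mat" where "H = mat (Suc n) (Suc n) (\<lambda>(i,k). of_int (y i - y 0) gchoose k)"
  have H: "Bm (Suc n) y * C = H"
  proof (rule eq_matI)
    fix i k assume i: "i < dim_row H" and k: "k < dim_col H"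
    hence ik: "i < Suc n" "k < Suc n" by (auto simp: H_def)
    have "(Bm (Suc n) y * C) $$ (i,k) = (\<Sum>l<Suc n. (of_int (y i) gchoose l) * (if l \<le> k then of_int (- y 0) gchoose (k - l) else 0))"
      unfolding mult_entry[OF Bc Cc ik] by (intro sum.cong refl) (use ik in \<open>auto simp: Bm_def C_def\<close>)
    also have "\<dots> = (\<Sum>l\<in>{0..k}. (of_int (y i) gchoose l) * (of_int (- y 0) gchoose (k - l)))"
      using ik by (intro sum.mono_neutral_cong_right) auto
    also have "\<dots> = (of_int (y i) + of_int (- y 0)) gchoose k"
      by (rule gbinomial_Vandermonde)
    finally show "(Bm (Suc n) y * C) $$ (i,k) = H $$ (i,k)" using ik by (simp add: H_def)
  qed (auto simp: H_def Bm_def C_def)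
  have Hc: "H \<in> carrier_mat (Suc n) (Suc n)" by (simp add: H_def)
  have "det H = (\<Sum>j<Suc n. H $$ (0,j) * cofactor H 0 j)"
    by (rule laplace_expansion_row[OF Hc]) simp
  also have "\<dots> = (\<Sum>j<Suc n. if j = 0 then cofactor H 0 0 else 0)"
    by (intro sum.cong) (auto simp: H_def gbinomial_0_left)
  also have "\<dots> = det (mat_delete H 0 0)" by (simp add: cofactor_def)
  finally have dH: "det H = det (mat_delete H 0 0)" .
  define y' where "y' = (\<lambda>i. y (Suc i) - y 0 - 1)"
  have MD: "mat_delete H 0 0 = mat n n (\<lambda>(i,k). of_int (y (Suc i) - y 0) * (1 / of_nat (Suc k)) * (of_int (y' i) gchoose k))"
  proof (rule eq_matI)
    fix i k assume "i < dim_row (mat n n (\<lambda>(i,k). of_int (y (Suc i) - y 0) * (1 / of_nat (Suc k)) * (of_int (y' i) gchoose k) :: rat))"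
       "k < dim_col (mat n n (\<lambda>(i,k). of_int (y (Suc i) - y 0) * (1 / of_nat (Suc k)) * (of_int (y' i) gchoose k) :: rat))"
    hence ik: "i < n" "k < n" by auto
    have "(of_nat (Suc k) :: rat) * (of_int (y (Suc i) - y 0) gchoose Suc k) = of_int (y (Suc i) - y 0) * ((of_int (y (Suc i) - y 0) - 1) gchoose k)"
      by (rule gbinomial_absorption)
    hence "(of_int (y (Suc i) - y 0) gchoose Suc k :: rat) = of_int (y (Suc i) - y 0) * (1 / of_nat (Suc k)) * (of_int (y' i) gchoose k)"
      by (simp add: y'_def field_simps del: of_nat_Suc)
    thus "mat_delete H 0 0 $$ (i,k) = mat n n (\<lambda>(i,k). of_int (y (Suc i) - y 0) * (1 / of_nat (Suc k)) * (of_int (y' i) gchoose k)) $$ (i,k)"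
      using ik by (simp add: mat_delete_def H_def)
  qed (auto simp: mat_delete_def H_def)
  have "det (Bm (Suc n) y) = det H"
    using det_mult[OF Bc Cc] H detC by simp
  also have "\<dots> = (\<Prod>i<n. of_int (y (Suc i) - y 0)) * (\<Prod>k<n. 1 / of_nat (Suc k)) * det (Bm n y')"
    unfolding dH MD by (subst det_scale) (simp add: Bm_def)
  also have "\<dots> = (\<Prod>i<n. of_int (y (Suc i) - y 0)) * (\<Prod>k<n. 1 / of_nat (Suc k)) *
      ((\<Prod>j<n. \<Prod>i<j. of_int (y (Suc j) - y (Suc i))) / (\<Prod>j<n. fact j))"
    unfolding Suc.IH by (simp add: y'_def)
  also have "\<dots> = (\<Prod>j<Suc n. \<Prod>i<j. of_int (y j - y i)) / (\<Prod>j<Suc n. fact j)"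
  proof -
    have a: "(\<Prod>j<Suc n. \<Prod>i<j. of_int (y j - y i) :: rat) = (\<Prod>j<n. \<Prod>i<Suc j. of_int (y (Suc j) - y i))"
      by (subst prod.lessThan_Suc_shift) simp
    have b: "(\<Prod>j<n. \<Prod>i<Suc j. of_int (y (Suc j) - y i) :: rat) =
        (\<Prod>j<n. of_int (y (Suc j) - y 0)) * (\<Prod>j<n. \<Prod>i<j. of_int (y (Suc j) - y (Suc i)))"
      by (subst prod.lessThan_Suc_shift) (simp add: prod.distrib)
    have c: "(\<Prod>j<Suc n. fact j :: rat) = (\<Prod>j<n. of_nat (Suc j)) * (\<Prod>j<n. fact j)"
      by (subst prod.lessThan_Suc_shift) (simp add: prod.distrib fact_Suc)
    have d: "(\<Prod>k<n. 1 / of_nat (Suc k) :: rat) = 1 / (\<Prod>k<n. of_nat (Suc k))"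
      by (simp add: prod_dividef)
    show ?thesis unfolding a b c d by simp
  qed
  finally show ?case .
qed

lemma hockey:
  assumes "a \<le> b"
  shows "(\<Sum>t\<in>{a..<b}. (of_int t gchoose k :: rat)) = (of_int b gchoose Suc k) - (of_int a gchoose Suc k)"
  using assms
proof (induction b rule: int_ge_induct)
  case base then show ?case by simp
next
  case (step b)
  have "{a..<b+1} = insert b {a..<b}" using step by auto
  hence "(\<Sum>t\<in>{a..<b+1}. (of_int t gchoose k :: rat)) = (of_int b gchoose k) + (\<Sum>t\<in>{a..<b}. (of_int t gchoose k :: rat))"
    by simp
  also have "\<dots> = (of_int b gchoose k) + (of_int b gchoose Suc k) - (of_int a gchoose Suc k)"
    using step by simp
  also have "(of_int b gchoose k) + (of_int b gchoose Suc k) = ((of_int b + 1) gchoose Suc k :: rat)"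
    by (simp add: gbinomial_Suc_Suc)
  finally show ?case by simp
qed

lemma branch_det:
  assumes mono: "\<And>i. i < n \<Longrightarrow> y i \<le> y (Suc i)"
  shows "(\<Sum>z\<in>PiE {..<n} (\<lambda>i. {y i..<y (Suc i)}). det (Bm n z)) = det (Bm (Suc n) y)"
proof -
  define M :: "rat mat" where "M = mat n n (\<lambda>(i,k). (of_int (y (Suc i)) gchoose Suc k) - (of_int (y i) gchoose Suc k))"
  let ?P = "{p. p permutes {0..<n}}"
  let ?Z = "PiE {..<n} (\<lambda>i. {y i..<y (Suc i)})"
  have "(\<Sum>z\<in>?Z. det (Bm n z)) = (\<Sum>z\<in>?Z. \<Sum>p\<in>?P. signof p * (\<Prod>i<n. of_int (z i) gchoose p i))"
    by (intro sum.cong refl, subst det_def'[of _ n]) (auto simp: Bm_def atLeast0LessThan permutes_in_image intro!: sum.cong prod.cong)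
  also have "\<dots> = (\<Sum>p\<in>?P. signof p * (\<Sum>z\<in>?Z. (\<Prod>i<n. of_int (z i) gchoose p i)))"
    by (subst sum.swap) (simp add: sum_distrib_left)
  also have "\<dots> = (\<Sum>p\<in>?P. signof p * (\<Prod>i<n. M $$ (i, p i)))"
  proof (intro sum.cong refl arg_cong[where f = "\<lambda>x. _ * x"])
    fix p assume "p \<in> ?P"
    hence p: "p permutes {0..<n}" by simp
    have "(\<Sum>z\<in>?Z. (\<Prod>i<n. of_int (z i) gchoose p i)) = (\<Prod>i<n. \<Sum>t\<in>{y i..<y (Suc i)}. (of_int t gchoose p i :: rat))"
      by (subst prod_sum_PiE) auto
    also have "\<dots> = (\<Prod>i<n. M $$ (i, p i))"
      using p mono by (intro prod.cong refl) (auto simp: M_def hockey permutes_in_image)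
    finally show "(\<Sum>z\<in>?Z. (\<Prod>i<n. of_int (z i) gchoose p i)) = (\<Prod>i<n. M $$ (i, p i))" .
  qed
  also have "\<dots> = det M"
    by (subst det_def'[of _ n]) (auto simp: M_def atLeast0LessThan)
  finally have L: "(\<Sum>z\<in>?Z. det (Bm n z)) = det M" .
  define E :: "rat mat" where "E = mat (Suc n) (Suc n) (\<lambda>(i,j). if i = j then 1 else if i = Suc j then -1 else 0)"
  have Ec: "E \<in> carrier_mat (Suc n) (Suc n)" by (simp add: E_def)
  have Bc: "Bm (Suc n) y \<in> carrier_mat (Suc n) (Suc n)" by (simp add: Bm_def)
  have detE: "det E = 1"
    by (subst det_lower_triangular[OF _ Ec]) (auto simp: E_def prod_list_diag_prod)
  define Q where "Q = E * Bm (Suc n) y"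
  have Qc: "Q \<in> carrier_mat (Suc n) (Suc n)" using Ec Bc by (simp add: Q_def)
  have Qe: "Q $$ (i,k) = (of_int (y i) gchoose k) - (if i = 0 then 0 else of_int (y (i - 1)) gchoose k)"
    if ik: "i < Suc n" "k < Suc n" for i k
  proof -
    have "Q $$ (i,k) = (\<Sum>l<Suc n. (if i = l then 1 else if i = Suc l then -1 else 0) * (of_int (y l) gchoose k))"
      unfolding Q_def mult_entry[OF Ec Bc ik] by (intro sum.cong refl) (use ik in \<open>auto simp: Bm_def E_def\<close>)
    also have "\<dots> = (\<Sum>l<Suc n. (if l = i then of_int (y i) gchoose k else 0)) - (\<Sum>l<Suc n. (if Suc l = i then of_int (y l) gchoose k else 0))"
      by (subst sum_subtractf[symmetric]) (intro sum.cong refl, auto)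
    also have "\<dots> = (of_int (y i) gchoose k) - (if i = 0 then 0 else of_int (y (i - 1)) gchoose k)"
    proof -
      have "(\<Sum>l<Suc n. (if Suc l = i then of_int (y l) gchoose k else (0::rat))) = (\<Sum>l<Suc n. (if l = i - 1 \<and> i \<noteq> 0 then of_int (y l) gchoose k else 0))"
        by (intro sum.cong) auto
      also have "\<dots> = (if i = 0 then 0 else of_int (y (i - 1)) gchoose k)"
        using ik by (cases "i = 0") (auto simp: sum.delta)
      finally show ?thesis using ik by (simp add: sum.delta)
    qed
    finally show ?thesis .
  qed
  have "det (Bm (Suc n) y) = det Q"
    using det_mult[OF Ec Bc] detE by (simp add: Q_def)
  also have "\<dots> = (\<Sum>i<Suc n. Q $$ (i,0) * cofactor Q i 0)"
    by (rule laplace_expansion_column[OF Qc]) simp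
  also have "\<dots> = (\<Sum>i<Suc n. if i = 0 then cofactor Q 0 0 else 0)"
    by (intro sum.cong refl) (auto simp: Qe)
  also have "\<dots> = det (mat_delete Q 0 0)" by (simp add: cofactor_def)
  also have "mat_delete Q 0 0 = M"
    by (rule eq_matI) (use Qc in \<open>auto simp: mat_delete_def M_def Qe\<close>)
  finally show ?thesis using L by simp
qed


definition cnt :: "int list \<Rightarrow> int \<Rightarrow> int" where
  "cnt a s = int (card {i. i < length a \<and> s < a ! i})"

definition Aab :: "int list \<Rightarrow> int list \<Rightarrow> int" where
  "Aab a b = (\<Sum>i<length a. \<Sum>i'<length b. \<bar>a ! i - b ! i'\<bar>)"

definition gg :: "int list \<Rightarrow> int list \<Rightarrow> int" where
  "gg a b = 2 * Aab a b - Aab a a - Aab b b"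

lemma abs_level:
  fixes x y L U :: int
  assumes "L \<le> x" "L \<le> y" "x \<le> U" "y \<le> U"
  shows "\<bar>x - y\<bar> = (\<Sum>s\<in>{L..<U}. if (s < x) \<noteq> (s < y) then 1 else 0)"
proof -
  have "(\<Sum>s\<in>{L..<U}. if (s < x) \<noteq> (s < y) then 1 else 0) = (\<Sum>s\<in>{min x y..<max x y}. (if (s < x) \<noteq> (s < y) then 1 else 0 :: int))"
    using assms by (intro sum.mono_neutral_cong_right) auto
  also have "\<dots> = (\<Sum>s\<in>{min x y..<max x y}. 1)"
    by (intro sum.cong) auto
  also have "\<dots> = \<bar>x - y\<bar>" by (simp add: min_def max_def abs_if)
  finally show ?thesis by simp
qed

lemma sum_ind_card:
  "(\<Sum>i<(m::nat). if P i then 1 else 0 :: int) = int (card {i. i < m \<and> P i})"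
proof -
  have "(\<Sum>i<m. if P i then 1 else 0 :: int) = (\<Sum>i\<in>{i. i < m \<and> P i}. 1)"
    by (intro sum.mono_neutral_cong_right) auto
  thus ?thesis by simp
qed

lemma sum_ind_card_not:
  "(\<Sum>i<(m::nat). if P i then 0 else 1 :: int) = int m - int (card {i. i < m \<and> P i})"
proof -
  have "(\<Sum>i<m. if P i then 0 else 1 :: int) = (\<Sum>i<m. 1 - (if P i then 1 else 0))"
    by (intro sum.cong) auto
  also have "\<dots> = int m - (\<Sum>i<m. if P i then 1 else 0)"
    by (simp add: sum_subtractf)
  finally show ?thesis by (simp add: sum_ind_card)
qed

lemma Aab_level:
  assumes "\<And>x. x \<in> set a \<Longrightarrow> L \<le> x \<and> x \<le> U" "\<And>x. x \<in> set b \<Longrightarrow> L \<le> x \<and> x \<le> U"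
  shows "Aab a b = (\<Sum>s\<in>{L..<U}. cnt a s * (int (length b) - cnt b s) + (int (length a) - cnt a s) * cnt b s)"
proof -
  have "Aab a b = (\<Sum>i<length a. \<Sum>i'<length b. \<Sum>s\<in>{L..<U}. if (s < a!i) \<noteq> (s < b!i') then 1 else 0)"
    unfolding Aab_def using assms by (intro sum.cong refl abs_level) (auto simp: nth_mem)
  also have "\<dots> = (\<Sum>s\<in>{L..<U}. \<Sum>i<length a. \<Sum>i'<length b. if (s < a!i) \<noteq> (s < b!i') then 1 else 0)"
    by (subst sum.swap) (simp add: sum.swap[of _ "{..<length b}"])
  also have "\<dots> = (\<Sum>s\<in>{L..<U}. cnt a s * (int (length b) - cnt b s) + (int (length a) - cnt a s) * cnt b s)"
  proof (intro sum.cong refl)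
    fix s
    have "(\<Sum>i<length a. \<Sum>i'<length b. if (s < a!i) \<noteq> (s < b!i') then 1 else 0 :: int) =
      (\<Sum>i<length a. \<Sum>i'<length b. (if s < a!i then 1 else 0) * (if s < b!i' then 0 else 1) + (if s < a!i then 0 else 1) * (if s < b!i' then 1 else 0))"
      by (intro sum.cong) auto
    also have "\<dots> = (\<Sum>i<length a. if s < a!i then 1 else 0) * (\<Sum>i'<length b. if s < b!i' then 0 else 1) +
       (\<Sum>i<length a. if s < a!i then 0 else 1) * (\<Sum>i'<length b. if s < b!i' then 1 else 0)"
      by (simp add: sum.distrib sum_product)
    also have "\<dots> = cnt a s * (int (length b) - cnt b s) + (int (length a) - cnt a s) * cnt b s"
      unfolding sum_ind_card sum_ind_card_not cnt_def ..
    finally show "(\<Sum>i<length a. \<Sum>i'<length b. if (s < a!i) \<noteq> (s < b!i') then 1 else 0) = cnt a s * (int (length b) - cnt b s) + (int (length a) - cnt a s) * cnt b s" .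
  qed
  finally show ?thesis .
qed

lemma gg_level:
  assumes len: "length a = Suc (length b)"
    and "\<And>x. x \<in> set a \<Longrightarrow> L \<le> x \<and> x \<le> U" "\<And>x. x \<in> set b \<Longrightarrow> L \<le> x \<and> x \<le> U"
  shows "gg a b = (\<Sum>s\<in>{L..<U}. 2 * ((cnt a s - cnt b s) * (cnt a s - cnt b s - 1)))"
proof -
  have "gg a b = (\<Sum>s\<in>{L..<U}. 2 * (cnt a s * (int (length b) - cnt b s) + (int (length a) - cnt a s) * cnt b s)
     - (cnt a s * (int (length a) - cnt a s) + (int (length a) - cnt a s) * cnt a s)
     - (cnt b s * (int (length b) - cnt b s) + (int (length b) - cnt b s) * cnt b s))"
    unfolding gg_def using assms
    by (subst (1 2 3) Aab_level[of _ L U]) (auto simp: sum_subtractf sum_distrib_left)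
  also have "\<dots> = (\<Sum>s\<in>{L..<U}. 2 * ((cnt a s - cnt b s) * (cnt a s - cnt b s - 1)))"
    using len by (intro sum.cong refl) (simp add: algebra_simps)
  finally show ?thesis .
qed

lemma prod_pred_nonneg: "0 \<le> (x::int) * (x - 1)"
proof (cases "x \<ge> 1")
  case True then show ?thesis by simp
next
  case False then have "x \<le> 0" by simp
  then show ?thesis by (simp add: mult_nonpos_nonpos)
qed

lemma abs_sum_list_nonneg: "0 \<le> sum_list (map abs (xs::int list))"
  by (induction xs) auto

lemma abs_le_sum_list: "x \<in> set xs \<Longrightarrow> \<bar>x::int\<bar> \<le> sum_list (map abs xs)"
  by (induction xs) (auto simp: add_increasing2 abs_sum_list_nonneg)

lemma gg_level_R:
  assumes len: "length a = Suc (length b)"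
  defines "R \<equiv> sum_list (map abs a) + sum_list (map abs b)"
  shows "gg a b = (\<Sum>s\<in>{-R..<R+1}. 2 * ((cnt a s - cnt b s) * (cnt a s - cnt b s - 1)))"
proof (rule gg_level[OF len])
  have "0 \<le> sum_list (map abs a)" "0 \<le> sum_list (map abs b)" by (auto intro: abs_sum_list_nonneg)
  then show "x \<in> set a \<Longrightarrow> - R \<le> x \<and> x \<le> R + 1" "x \<in> set b \<Longrightarrow> - R \<le> x \<and> x \<le> R + 1" for x
    using abs_le_sum_list[of x a] abs_le_sum_list[of x b] unfolding R_def by auto
qed

lemma gg_nonneg: "length a = Suc (length b) \<Longrightarrow> 0 \<le> gg a b"
  by (subst gg_level_R) (auto intro!: sum_nonneg simp: prod_pred_nonneg)

definition interlace :: "int list \<Rightarrow> int list \<Rightarrow> bool" where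
  "interlace a b \<longleftrightarrow> length a = Suc (length b) \<and> (\<forall>i<length b. a ! Suc i \<le> b ! i \<and> b ! i \<le> a ! i)"

lemma two_le_prod_pred: "x \<le> -1 \<or> 2 \<le> x \<Longrightarrow> 2 \<le> (x::int) * (x - 1)"
proof (elim disjE)
  assume x: "x \<le> -1"
  have "(-1) * (x - 1) \<le> x * (x - 1)" by (rule mult_right_mono_neg) (use x in auto)
  thus ?thesis using x by simp
next
  assume x: "2 \<le> x"
  have "2 * 1 \<le> x * (x - 1)" by (rule mult_mono) (use x in auto)
  thus ?thesis by simp
qed

lemma interlace_gg:
  assumes "interlace a b"
  shows "gg a b = 0"
proof -
  have len: "length a = Suc (length b)" and il: "\<And>i. i < length b \<Longrightarrow> a ! Suc i \<le> b ! i \<and> b ! i \<le> a ! i"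
    using assms by (auto simp: interlace_def)
  have t0: "(cnt a s - cnt b s) * (cnt a s - cnt b s - 1) = 0" for s
  proof -
    have "{i. i < length b \<and> s < b!i} \<subseteq> {i. i < length a \<and> s < a!i}"
      using len il by fastforce
    hence c1: "cnt b s \<le> cnt a s" unfolding cnt_def by (intro of_nat_mono card_mono) auto
    have "{i. i < length a \<and> s < a!i} \<subseteq> insert 0 (Suc ` {i. i < length b \<and> s < b!i})"
    proof
      fix k assume k: "k \<in> {i. i < length a \<and> s < a!i}"
      show "k \<in> insert 0 (Suc ` {i. i < length b \<and> s < b!i})"
      proof (cases k)
        case (Suc k')
        then show ?thesis using k len il[of k'] by force
      qed simp
    qed
    hence "card {i. i < length a \<and> s < a!i} \<le> card (insert 0 (Suc ` {i. i < length b \<and> s < b!i}))"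
      by (intro card_mono) auto
    also have "\<dots> \<le> Suc (card (Suc ` {i. i < length b \<and> s < b!i}))" by (rule card_insert_le_m1) auto
    also have "card (Suc ` {i. i < length b \<and> s < b!i}) = card {i. i < length b \<and> s < b!i}"
      by (rule card_image) auto
    finally have c2: "cnt a s \<le> cnt b s + 1" unfolding cnt_def by simp
    from c1 c2 have "cnt a s - cnt b s = 0 \<or> cnt a s - cnt b s = 1" by auto
    thus ?thesis by auto
  qed
  show ?thesis by (subst gg_level_R[OF len]) (simp add: t0)
qed

lemma gg_interlace:
  assumes len: "length a = Suc (length b)" and sa: "sorted_wrt (\<ge>) a" and sb: "sorted_wrt (\<ge>) b"
    and g0: "gg a b = 0"
  shows "interlace a b"
proof -
  define R where "R = sum_list (map abs a) + sum_list (map abs b)"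
  have Ra: "\<bar>a!i\<bar> \<le> R" if "i < length a" for i
    using abs_le_sum_list[of "a!i" a] abs_sum_list_nonneg[of b] that by (auto simp: R_def nth_mem)
  have Rb: "\<bar>b!i\<bar> \<le> R" if "i < length b" for i
    using abs_le_sum_list[of "b!i" b] abs_sum_list_nonneg[of a] that by (auto simp: R_def nth_mem)
  have "(\<Sum>s\<in>{-R..<R+1}. 2 * ((cnt a s - cnt b s) * (cnt a s - cnt b s - 1))) = 0"
    using g0 gg_level_R[OF len] by (simp add: R_def)
  hence t0: "\<And>s. s \<in> {-R..<R+1} \<Longrightarrow> 2 * ((cnt a s - cnt b s) * (cnt a s - cnt b s - 1)) = 0"
    by (subst (asm) sum_nonneg_eq_0_iff) (auto simp: prod_pred_nonneg)
  have sa': "\<And>i j. i < j \<Longrightarrow> j < length a \<Longrightarrow> a!j \<le> a!i" using sa by (simp add: sorted_wrt_iff_nth_less)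
  have sb': "\<And>i j. i < j \<Longrightarrow> j < length b \<Longrightarrow> b!j \<le> b!i" using sb by (simp add: sorted_wrt_iff_nth_less)
  show ?thesis unfolding interlace_def
  proof (intro conjI len allI impI)
    fix i assume i: "i < length b"
    show "b ! i \<le> a ! i"
    proof (rule ccontr)
      assume "\<not> b ! i \<le> a ! i"
      hence lt: "a!i < b!i" by simp
      define s where "s = a!i"
      have "{k. k < length a \<and> s < a!k} \<subseteq> {..<i}"
      proof
        fix k assume k: "k \<in> {k. k < length a \<and> s < a!k}"
        show "k \<in> {..<i}"
        proof (rule ccontr)
          assume "k \<notin> {..<i}"
          hence "i \<le> k" by simp
          hence "a!k \<le> a!i" using sa'[of i k] k by (cases "i = k") auto
          thus False using k by (simp add: s_def)
        qed
      qed
      hence p: "cnt a s \<le> int i" unfolding cnt_def using card_mono[of "{..<i}"] by fastforce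
      have "{..i} \<subseteq> {k. k < length b \<and> s < b!k}"
      proof
        fix k assume "k \<in> {..i}"
        hence "k \<le> i" by simp
        hence "b!i \<le> b!k" using sb'[of k i] i by (cases "k = i") auto
        thus "k \<in> {k. k < length b \<and> s < b!k}" using lt i \<open>k \<le> i\<close> by (simp add: s_def)
      qed
      hence "card {..i} \<le> card {k. k < length b \<and> s < b!k}" by (intro card_mono) auto
      hence q: "int i + 1 \<le> cnt b s" unfolding cnt_def by simp
      have "s \<in> {-R..<R+1}" using Ra[of i] i len by (auto simp: s_def)
      from t0[OF this] two_le_prod_pred[of "cnt a s - cnt b s"] p q show False by auto
    qed
    show "a ! Suc i \<le> b ! i"
    proof (rule ccontr)
      assume "\<not> a ! Suc i \<le> b ! i"
      hence lt: "b!i < a!Suc i" by simp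
      define s where "s = b!i"
      have "{k. k < length b \<and> s < b!k} \<subseteq> {..<i}"
      proof
        fix k assume k: "k \<in> {k. k < length b \<and> s < b!k}"
        show "k \<in> {..<i}"
        proof (rule ccontr)
          assume "k \<notin> {..<i}"
          hence "i \<le> k" by simp
          hence "b!k \<le> b!i" using sb'[of i k] k by (cases "i = k") auto
          thus False using k by (simp add: s_def)
        qed
      qed
      hence q: "cnt b s \<le> int i" unfolding cnt_def using card_mono[of "{..<i}"] by fastforce
      have "{..Suc i} \<subseteq> {k. k < length a \<and> s < a!k}"
      proof
        fix k assume "k \<in> {..Suc i}"
        hence "k \<le> Suc i" by simp
        hence "a!Suc i \<le> a!k" using sa'[of k "Suc i"] i len by (cases "k = Suc i") auto
        thus "k \<in> {k. k < length a \<and> s < a!k}" using lt i len \<open>k \<le> Suc i\<close> by (simp add: s_def)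
      qed
      hence "card {..Suc i} \<le> card {k. k < length a \<and> s < a!k}" by (intro card_mono) auto
      hence p: "int i + 2 \<le> cnt a s" unfolding cnt_def by simp
      have "s \<in> {-R..<R+1}" using Rb[of i] i by (auto simp: s_def)
      from t0[OF this] two_le_prod_pred[of "cnt a s - cnt b s"] p q show False by auto
    qed
  qed
qed

lemma gg_bound:
  assumes len: "length a = Suc (length b)" and Ra: "\<And>x. x \<in> set a \<Longrightarrow> \<bar>x\<bar> \<le> R0"
    and gK: "gg a b \<le> K" and x: "x \<in> set b"
  shows "\<bar>x\<bar> \<le> R0 + K"
proof (rule ccontr)
  assume ne: "\<not> \<bar>x\<bar> \<le> R0 + K"
  define R where "R = sum_list (map abs a) + sum_list (map abs b)"
  define t where "t = (\<lambda>s. 2 * ((cnt a s - cnt b s) * (cnt a s - cnt b s - 1)))"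
  have g: "gg a b = (\<Sum>s\<in>{-R..<R+1}. t s)" using gg_level_R[OF len] by (simp add: R_def t_def)
  have tnn: "0 \<le> t s" for s by (simp add: t_def prod_pred_nonneg)
  have R0: "0 \<le> R0" using Ra[of "a!0"] len by (auto simp: nth_mem)
  have aR: "\<bar>y\<bar> \<le> R" if "y \<in> set a" for y
    using abs_le_sum_list[of y a] abs_sum_list_nonneg[of b] that by (auto simp: R_def)
  have bR: "\<bar>y\<bar> \<le> R" if "y \<in> set b" for y
    using abs_le_sum_list[of y b] abs_sum_list_nonneg[of a] that by (auto simp: R_def)
  have R0R: "0 \<le> R" using abs_sum_list_nonneg[of a] abs_sum_list_nonneg[of b] by (simp add: R_def)
  obtain i where i: "i < length b" "b!i = x" using x by (auto simp: in_set_conv_nth)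
  have key: "gg a b \<ge> card S" if S: "S \<subseteq> {-R..<R+1}" and tS: "\<And>s. s \<in> S \<Longrightarrow> 1 \<le> t s" for S
  proof -
    have fS: "finite S" using S finite_subset by blast
    have "int (card S) = (\<Sum>s\<in>S. 1)" by simp
    also have "\<dots> \<le> (\<Sum>s\<in>S. t s)" using tS by (intro sum_mono) auto
    also have "\<dots> \<le> (\<Sum>s\<in>{-R..<R+1}. t s)" using S tnn by (intro sum_mono2) auto
    finally show ?thesis using g by simp
  qed
  show False
  proof (cases "x > R0 + K")
    case True
    have "{R0..<x} \<subseteq> {-R..<R+1}" using R0 R0R bR[OF x] by auto
    moreover have "1 \<le> t s" if s: "s \<in> {R0..<x}" for s
    proof -
      have "{k. k < length a \<and> s < a!k} = {}"
      proof -
        have "a!k \<le> s" if "k < length a" for k using Ra[of "a!k"] s that by (auto simp: nth_mem abs_le_iff)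
        thus ?thesis by force
      qed
      hence p: "cnt a s = 0" by (simp add: cnt_def)
      have "{i} \<subseteq> {k. k < length b \<and> s < b!k}" using i s by auto
      hence "card {i} \<le> card {k. k < length b \<and> s < b!k}" by (intro card_mono) auto
      hence q: "1 \<le> cnt b s" by (simp add: cnt_def)
      show ?thesis using two_le_prod_pred[of "cnt a s - cnt b s"] p q by (simp add: t_def)
    qed
    ultimately have "gg a b \<ge> card {R0..<x}" by (rule key)
    thus False using True gK gg_nonneg[OF len] R0 by (simp split: if_splits)
  next
    case False
    hence xl: "x < - R0 - K" using ne by auto
    have "{x..< -R0} \<subseteq> {-R..<R+1}" using R0 R0R bR[OF x] by auto
    moreover have "1 \<le> t s" if s: "s \<in> {x..< -R0}" for s
    proof -
      have "{k. k < length a \<and> s < a!k} = {..<length a}"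
      proof -
        have "s < a!k" if "k < length a" for k using Ra[of "a!k"] s that by (auto simp: nth_mem abs_le_iff)
        thus ?thesis by force
      qed
      hence p: "cnt a s = int (length b) + 1" by (simp add: cnt_def len)
      have "{k. k < length b \<and> s < b!k} \<subseteq> {..<length b} - {i}" using i s by auto
      hence "card {k. k < length b \<and> s < b!k} \<le> card ({..<length b} - {i})" by (intro card_mono) auto
      hence q: "cnt b s \<le> int (length b) - 1" using i by (simp add: cnt_def)
      show ?thesis using two_le_prod_pred[of "cnt a s - cnt b s"] p q by (simp add: t_def)
    qed
    ultimately have "gg a b \<ge> card {x..< -R0}" by (rule key)
    thus False using xl gK gg_nonneg[OF len] R0 by (simp split: if_splits)
  qed
qed


lemma sym_sum:
  fixes h :: "nat \<Rightarrow> nat \<Rightarrow> int"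
  assumes "\<And>i j. h i j = h j i" "\<And>i. h i i = 0"
  shows "(\<Sum>i<n. \<Sum>i'<n. h i i') = 2 * (\<Sum>i<n. \<Sum>i'<n. if i < i' then h i i' else 0)"
proof (induction n)
  case 0 then show ?case by simp
next
  case (Suc n)
  have a: "(\<Sum>i<Suc n. \<Sum>i'<Suc n. h i i') = (\<Sum>i<n. \<Sum>i'<n. h i i') + (\<Sum>i<n. h i n) + (\<Sum>i'<n. h n i') + h n n"
    by (simp add: sum.distrib)
  have b: "(\<Sum>i<Suc n. \<Sum>i'<Suc n. if i < i' then h i i' else 0) = (\<Sum>i<n. \<Sum>i'<n. if i < i' then h i i' else 0) + (\<Sum>i<n. h i n)"
    by (simp add: sum.distrib)
  have c: "(\<Sum>i'<n. h n i') = (\<Sum>i<n. h i n)" using assms(1) by simp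
  show ?case unfolding a b c using Suc assms(2) by simp
qed

definition Vs :: "int list \<Rightarrow> int" where
  "Vs mu = (\<Sum>i<length mu. \<Sum>i'<length mu. if i < i' then \<bar>mu ! i - mu ! i'\<bar> else 0)"

lemma Vs_Aab: "Aab mu mu = 2 * Vs mu"
  unfolding Aab_def Vs_def by (rule sym_sum) auto

lemma lin_sum:
  fixes f :: "nat \<Rightarrow> int"
  shows "(\<Sum>i<n. \<Sum>i'<n. if i < i' then f i - f i' else 0) = (\<Sum>i<n. (int n - 1 - 2 * int i) * f i)"
proof (induction n)
  case 0 then show ?case by simp
next
  case (Suc n)
  have a: "(\<Sum>i<Suc n. \<Sum>i'<Suc n. if i < i' then f i - f i' else 0) = (\<Sum>i<n. \<Sum>i'<n. if i < i' then f i - f i' else 0) + (\<Sum>i<n. f i - f n)"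
    by (simp add: sum.distrib)
  have b0: "(\<Sum>i<n. (int (Suc n) - 1 - 2 * int i) * f i) = (\<Sum>i<n. (int n - 1 - 2 * int i) * f i + f i)"
    by (intro sum.cong refl) (simp add: algebra_simps)
  have b: "(\<Sum>i<Suc n. (int (Suc n) - 1 - 2 * int i) * f i) = (\<Sum>i<n. (int n - 1 - 2 * int i) * f i) + (\<Sum>i<n. f i) - int n * f n"
  proof -
    have "(\<Sum>i<Suc n. (int (Suc n) - 1 - 2 * int i) * f i) = (\<Sum>i<n. (int (Suc n) - 1 - 2 * int i) * f i) + (int (Suc n) - 1 - 2 * int n) * f n"
      by (simp only: sum.lessThan_Suc)
    also have "\<dots> = (\<Sum>i<n. (int n - 1 - 2 * int i) * f i) + (\<Sum>i<n. f i) + (int (Suc n) - 1 - 2 * int n) * f n"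
      unfolding b0 by (simp only: sum.distrib)
    also have "(int (Suc n) - 1 - 2 * int n) * f n = - (int n * f n)" by (simp add: algebra_simps)
    finally show ?thesis by simp
  qed
  show ?case unfolding a b Suc by (simp add: sum_subtractf)
qed

lemma dominant_Vs:
  assumes "dominant N lam"
  shows "Vs lam = int (N - 1) * size_cw lam - 2 * n_cw lam"
proof -
  have len: "length lam = N" and s: "\<And>i j. i < j \<Longrightarrow> j < N \<Longrightarrow> lam ! j \<le> lam ! i"
    using assms by (auto simp: dominant_def sorted_wrt_iff_nth_less)
  have "Vs lam = (\<Sum>i<N. \<Sum>i'<N. if i < i' then lam ! i - lam ! i' else 0)"
    unfolding Vs_def len by (intro sum.cong refl) (auto dest: s)
  also have "\<dots> = (\<Sum>i<N. (int N - 1 - 2 * int i) * lam ! i)" by (rule lin_sum)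
  also have "\<dots> = (int N - 1) * (\<Sum>i<N. lam ! i) - 2 * (\<Sum>i<N. int i * lam ! i)"
    by (simp add: algebra_simps sum_subtractf sum_distrib_left sum.distrib)
  also have "\<dots> = int (N - 1) * size_cw lam - 2 * n_cw lam"
  proof (cases N)
    case 0 then show ?thesis using len by (simp add: size_cw_def n_cw_def)
  next
    case (Suc M) then show ?thesis using len
      by (simp add: size_cw_def n_cw_def sum_list_sum_nth atLeast0LessThan)
  qed
  finally show ?thesis .
qed

lemma telescope: "(\<Sum>j\<in>{1..(n::nat)}. (h (j - 1) - h j :: int)) = h 0 - h n"
  by (induction n) auto

lemma tuples_len:
  assumes "ls \<in> tuples N" "dominant N lam" "j \<le> N - 1"
  shows "length ((lam # ls) ! j) = N - j"
proof (cases j)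
  case 0 then show ?thesis using assms by (simp add: dominant_def)
next
  case (Suc j')
  have "\<forall>j\<in>{1..N-1}. dominant (N-j) (ls!(j-1))" using assms(1) by (simp add: tuples_def)
  moreover have "j \<in> {1..N-1}" using Suc assms(3) by auto
  ultimately have "dominant (N - j) (ls ! (j - 1))" by blast
  then show ?thesis using Suc by (simp add: dominant_def)
qed

lemma tuples_dom:
  assumes "ls \<in> tuples N" "dominant N lam" "j \<le> N - 1"
  shows "sorted_wrt (\<ge>) ((lam # ls) ! j)"
proof (cases j)
  case 0 then show ?thesis using assms by (simp add: dominant_def)
next
  case (Suc j')
  have "\<forall>j\<in>{1..N-1}. dominant (N-j) (ls!(j-1))" using assms(1) by (simp add: tuples_def)
  moreover have "j \<in> {1..N-1}" using Suc assms(3) by auto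
  ultimately have "dominant (N - j) (ls ! (j - 1))" by blast
  then show ?thesis using Suc by (simp add: dominant_def)
qed

lemma twoDelta_decomp:
  assumes N: "N \<ge> 1" and dom: "dominant N lam" and ls: "ls \<in> tuples N"
  shows "2 * twoDelta lam ls = 2 * Vs lam + (\<Sum>j\<in>{1..N-1}. gg ((lam # ls) ! (j - 1)) ((lam # ls) ! j))"
proof -
  define L where "L = (\<lambda>j. (lam # ls) ! j)"
  have lenlam: "length lam = N" using dom by (simp add: dominant_def)
  have lenL: "\<And>j. j \<le> N - 1 \<Longrightarrow> length (L j) = N - j" unfolding L_def using tuples_len[OF ls dom] .
  have td: "twoDelta lam ls = (\<Sum>j\<in>{1..N-1}. Aab (L (j - 1)) (L j)) - (\<Sum>j\<in>{1..N-1}. Aab (L j) (L j))"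
  proof -
    have e1: "(\<Sum>j\<in>{1..N-1}. \<Sum>i<N-j+1. \<Sum>i'<N-j. \<bar>L (j-1) ! i - L j ! i'\<bar>) = (\<Sum>j\<in>{1..N-1}. Aab (L (j - 1)) (L j))"
    proof (intro sum.cong refl)
      fix j assume j: "j \<in> {1..N-1}"
      have "N - j + 1 = length (L (j-1))" "N - j = length (L j)" using lenL[of "j-1"] lenL[of j] j by auto
      then show "(\<Sum>i<N-j+1. \<Sum>i'<N-j. \<bar>L (j-1) ! i - L j ! i'\<bar>) = Aab (L (j - 1)) (L j)"
        unfolding Aab_def by simp
    qed
    have e2: "(\<Sum>j\<in>{1..N-1}. \<Sum>i<N-j. \<Sum>i'<N-j. if i < i' then \<bar>L j ! i - L j ! i'\<bar> else 0) = (\<Sum>j\<in>{1..N-1}. Vs (L j))"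
    proof (intro sum.cong refl)
      fix j assume j: "j \<in> {1..N-1}"
      have "N - j = length (L j)" using lenL[of j] j by auto
      then show "(\<Sum>i<N-j. \<Sum>i'<N-j. if i < i' then \<bar>L j ! i - L j ! i'\<bar> else 0) = Vs (L j)"
        unfolding Vs_def by simp
    qed
    have e3: "2 * (\<Sum>j\<in>{1..N-1}. Vs (L j)) = (\<Sum>j\<in>{1..N-1}. Aab (L j) (L j))"
      by (simp add: Vs_Aab sum_distrib_left)
    show ?thesis unfolding twoDelta_def Let_def lenlam L_def[symmetric] e1 e2 e3 ..
  qed
  have tel: "(\<Sum>j\<in>{1..N-1}. Aab (L (j - 1)) (L (j - 1)) - Aab (L j) (L j)) = Aab (L 0) (L 0) - Aab (L (N-1)) (L (N-1))"
    by (rule telescope)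
  have last: "Aab (L (N-1)) (L (N-1)) = 0"
  proof -
    have "length (L (N-1)) = 1" using lenL[of "N-1"] N by simp
    thus ?thesis by (simp add: Aab_def)
  qed
  have "(\<Sum>j\<in>{1..N-1}. gg (L (j - 1)) (L j)) = 2 * (\<Sum>j\<in>{1..N-1}. Aab (L (j - 1)) (L j))
       - (\<Sum>j\<in>{1..N-1}. Aab (L (j - 1)) (L (j - 1)) - Aab (L j) (L j)) - 2 * (\<Sum>j\<in>{1..N-1}. Aab (L j) (L j))"
    by (simp add: gg_def sum_subtractf sum_distrib_left sum.distrib algebra_simps)
  also have "\<dots> = 2 * twoDelta lam ls - 2 * Vs lam"
    unfolding tel last td by (simp add: L_def Vs_Aab)
  finally show ?thesis unfolding L_def by simp
qed

lemma gg_nonneg_j: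
  assumes "dominant N lam" "ls \<in> tuples N" "j \<in> {1..N-1}"
  shows "0 \<le> gg ((lam # ls) ! (j - 1)) ((lam # ls) ! j)"
  using assms tuples_len[OF assms(2,1), of "j-1"] tuples_len[OF assms(2,1), of j]
  by (intro gg_nonneg) auto

lemma td_ge:
  assumes N: "N \<ge> 1" and dom: "dominant N lam" and ls: "ls \<in> tuples N"
  shows "Vs lam \<le> twoDelta lam ls"
proof -
  have "0 \<le> (\<Sum>j\<in>{1..N-1}. gg ((lam # ls) ! (j - 1)) ((lam # ls) ! j))"
    by (intro sum_nonneg gg_nonneg_j[OF dom ls])
  thus ?thesis using twoDelta_decomp[OF assms] by simp
qed

lemma td_le_iff:
  assumes N: "N \<ge> 1" and dom: "dominant N lam" and ls: "ls \<in> tuples N"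
  shows "twoDelta lam ls \<le> Vs lam \<longleftrightarrow> (\<forall>j\<in>{1..N-1}. interlace ((lam # ls) ! (j - 1)) ((lam # ls) ! j))"
proof -
  let ?g = "\<lambda>j. gg ((lam # ls) ! (j - 1)) ((lam # ls) ! j)"
  have lens: "length ((lam # ls) ! (j - 1)) = Suc (length ((lam # ls) ! j))" if "j \<in> {1..N-1}" for j
    using tuples_len[OF ls dom, of "j-1"] tuples_len[OF ls dom, of j] that by auto
  have "twoDelta lam ls \<le> Vs lam \<longleftrightarrow> (\<Sum>j\<in>{1..N-1}. ?g j) = 0"
    using twoDelta_decomp[OF assms] td_ge[OF assms] sum_nonneg[of "{1..N-1}" ?g, OF gg_nonneg_j[OF dom ls]] by auto
  also have "\<dots> \<longleftrightarrow> (\<forall>j\<in>{1..N-1}. ?g j = 0)"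
    using gg_nonneg_j[OF dom ls] by (intro sum_nonneg_eq_0_iff) (simp, blast)
  also have "\<dots> \<longleftrightarrow> (\<forall>j\<in>{1..N-1}. interlace ((lam # ls) ! (j - 1)) ((lam # ls) ! j))"
  proof (intro ball_cong refl iffI)
    fix j assume j: "j \<in> {1..N-1}"
    show "?g j = 0 \<Longrightarrow> interlace ((lam # ls) ! (j - 1)) ((lam # ls) ! j)"
      by (rule gg_interlace[OF lens[OF j] tuples_dom[OF ls dom] tuples_dom[OF ls dom]]) (use j in auto)
    show "interlace ((lam # ls) ! (j - 1)) ((lam # ls) ! j) \<Longrightarrow> ?g j = 0"
      by (rule interlace_gg)
  qed
  finally show ?thesis .
qed

lemma finite_tuples_le:
  assumes N: "N \<ge> 1" and dom: "dominant N lam"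
  shows "finite {ls\<in>tuples N. twoDelta lam ls \<le> k}"
proof -
  define K where "K = 2 * (k - Vs lam)"
  define R0 where "R0 = sum_list (map abs lam)"
  define B where "B = R0 + int N * \<bar>K\<bar>"
  have bnd: "\<bar>x\<bar> \<le> B" if ls: "ls \<in> tuples N" and le: "twoDelta lam ls \<le> k" and j: "j \<le> N - 1"
    and x: "x \<in> set ((lam # ls) ! j)" for ls j x
  proof -
    let ?L = "\<lambda>j. (lam # ls) ! j"
    have gK: "gg (?L (j - 1)) (?L j) \<le> K" if "j \<in> {1..N-1}" for j
    proof -
      have "gg (?L (j - 1)) (?L j) \<le> (\<Sum>j\<in>{1..N-1}. gg (?L (j - 1)) (?L j))"
      proof (rule member_le_sum[OF that])
        show "\<And>x. x \<in> {1..N - 1} - {j} \<Longrightarrow> 0 \<le> gg (?L (x - 1)) (?L x)"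
          using gg_nonneg_j[OF dom ls] by blast
      qed simp
      thus ?thesis using twoDelta_decomp[OF N dom ls] le by (simp add: K_def)
    qed
    have "\<forall>x\<in>set (?L j). \<bar>x\<bar> \<le> R0 + int j * K" using j
    proof (induction j)
      case 0
      then show ?case by (auto simp: R0_def abs_le_sum_list)
    next
      case (Suc j)
      have lens: "length (?L j) = Suc (length (?L (Suc j)))"
        using tuples_len[OF ls dom, of j] tuples_len[OF ls dom, of "Suc j"] Suc.prems by auto
      have "\<bar>x\<bar> \<le> R0 + int j * K + K" if "x \<in> set (?L (Suc j))" for x
        using gg_bound[OF lens _ _ that] Suc gK[of "Suc j"] by auto
      thus ?case by (simp add: algebra_simps)
    qed
    hence "\<bar>x\<bar> \<le> R0 + int j * K" using x by blast
    also have "int j * K \<le> int N * \<bar>K\<bar>"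
    proof -
      have "int j * K \<le> int j * \<bar>K\<bar>" by (intro mult_left_mono) auto
      also have "\<dots> \<le> int N * \<bar>K\<bar>" using j by (intro mult_right_mono) auto
      finally show ?thesis .
    qed
    finally show ?thesis by (simp add: B_def)
  qed
  have "{ls\<in>tuples N. twoDelta lam ls \<le> k} \<subseteq> {ls. set ls \<subseteq> {l. set l \<subseteq> {-B..B} \<and> length l \<le> N} \<and> length ls \<le> N}"
  proof (safe)
    fix ls assume ls: "ls \<in> tuples N" and le: "twoDelta lam ls \<le> k"
    show "length ls \<le> N" using ls by (simp add: tuples_def)
    fix l assume l: "l \<in> set ls"
    then obtain j where j: "j < length ls" "ls ! j = l" by (auto simp: in_set_conv_nth)
    have jN: "Suc j \<le> N - 1" using j ls by (simp add: tuples_def)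
    have "length l = N - Suc j" using tuples_len[OF ls dom jN] j by simp
    thus "length l \<le> N" by simp
    fix x assume "x \<in> set l"
    thus "x \<in> {-B..B}" using bnd[OF ls le jN, of x] j by auto
  qed
  moreover have "finite {ls. set ls \<subseteq> {l. set l \<subseteq> {-B..B} \<and> length l \<le> N} \<and> length ls \<le> N}"
    by (intro finite_lists_length_le) (auto intro: finite_lists_length_le)
  ultimately show ?thesis by (rule finite_subset)
qed


definition GT :: "nat \<Rightarrow> int list \<Rightarrow> int list list set" where
  "GT N lam = {ls \<in> tuples N. \<forall>j\<in>{1..N-1}. interlace ((lam # ls) ! (j - 1)) ((lam # ls) ! j)}"

definition yv :: "int list \<Rightarrow> nat \<Rightarrow> int" where
  "yv lam = (\<lambda>i. int i - lam ! i)"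

lemma GT_eq:
  assumes "N \<ge> 1" "dominant N lam"
  shows "{ls\<in>tuples N. twoDelta lam ls \<le> Vs lam} = GT N lam"
  using td_le_iff[OF assms] unfolding GT_def by blast

lemma finite_GT:
  assumes "N \<ge> 1" "dominant N lam"
  shows "finite (GT N lam)"
  using finite_tuples_le[OF assms, of "Vs lam"] GT_eq[OF assms] by simp

lemma ball_Suc_split:
  assumes "n \<ge> 1"
  shows "(\<forall>j\<in>{1..n}. P j) \<longleftrightarrow> P 1 \<and> (\<forall>j\<in>{1..n-1}. P (Suc j))"
proof
  assume "\<forall>j\<in>{1..n}. P j" thus "P 1 \<and> (\<forall>j\<in>{1..n-1}. P (Suc j))" using assms by auto
next
  assume a: "P 1 \<and> (\<forall>j\<in>{1..n-1}. P (Suc j))"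
  show "\<forall>j\<in>{1..n}. P j"
  proof
    fix j assume j: "j \<in> {1..n}"
    show "P j"
    proof (cases "j = 1")
      case True then show ?thesis using a by simp
    next
      case False
      then obtain j' where "j = Suc j'" "j' \<in> {1..n-1}" using j by (cases j) auto
      then show ?thesis using a by auto
    qed
  qed
qed

lemma tuples_Cons:
  assumes "n \<ge> 1"
  shows "mu # rest \<in> tuples (Suc n) \<longleftrightarrow> dominant n mu \<and> rest \<in> tuples n"
proof -
  have "mu # rest \<in> tuples (Suc n) \<longleftrightarrow> length rest = n - 1 \<and> (\<forall>j\<in>{1..n}. dominant (Suc n - j) ((mu # rest) ! (j - 1)))"
    unfolding tuples_def using assms by auto
  also have "\<dots> \<longleftrightarrow> length rest = n - 1 \<and> dominant n mu \<and> (\<forall>j\<in>{1..n-1}. dominant (n - j) (rest ! (j - 1)))"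
  proof -
    have "(\<forall>j\<in>{1..n-1}. dominant (Suc n - Suc j) ((mu # rest) ! (Suc j - 1))) \<longleftrightarrow> (\<forall>j\<in>{1..n-1}. dominant (n - j) (rest ! (j - 1)))"
      by (intro ball_cong refl) (auto simp: nth_Cons_pos)
    thus ?thesis by (subst ball_Suc_split[OF assms]) simp
  qed
  also have "\<dots> \<longleftrightarrow> dominant n mu \<and> rest \<in> tuples n" unfolding tuples_def by auto
  finally show ?thesis .
qed

lemma interlace_dom:
  assumes "dominant (Suc n) lam" "interlace lam mu"
  shows "dominant n mu"
proof -
  have len: "length lam = Suc n" "length mu = n" and il: "\<And>i. i < n \<Longrightarrow> lam ! Suc i \<le> mu ! i \<and> mu ! i \<le> lam ! i"
    using assms by (auto simp: interlace_def dominant_def)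
  have s: "\<And>i j. i < j \<Longrightarrow> j < Suc n \<Longrightarrow> lam ! j \<le> lam ! i"
    using assms by (auto simp: dominant_def sorted_wrt_iff_nth_less)
  have "mu ! j \<le> mu ! i" if "i < j" "j < n" for i j
  proof -
    have "mu ! j \<le> lam ! j" using il[of j] that by simp
    also have "lam ! j \<le> lam ! Suc i" using s[of "Suc i" j] that by (cases "Suc i = j") auto
    also have "lam ! Suc i \<le> mu ! i" using il[of i] that by simp
    finally show ?thesis .
  qed
  thus ?thesis using len by (auto simp: dominant_def sorted_wrt_iff_nth_less)
qed

lemma GT_Cons:
  assumes "n \<ge> 1"
  shows "mu # rest \<in> GT (Suc n) lam \<longleftrightarrow> interlace lam mu \<and> dominant n mu \<and> rest \<in> GT n mu"
proof -
  have "(\<forall>j\<in>{1..n}. interlace ((lam # mu # rest) ! (j - 1)) ((lam # mu # rest) ! j)) \<longleftrightarrow>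
     interlace lam mu \<and> (\<forall>j\<in>{1..n-1}. interlace ((lam # mu # rest) ! j) ((lam # mu # rest) ! Suc j))"
    by (subst ball_Suc_split[OF assms]) simp
  also have "(\<forall>j\<in>{1..n-1}. interlace ((lam # mu # rest) ! j) ((lam # mu # rest) ! Suc j)) \<longleftrightarrow>
     (\<forall>j\<in>{1..n-1}. interlace ((mu # rest) ! (j - 1)) ((mu # rest) ! j))"
    by (intro ball_cong refl) (auto simp: nth_Cons_pos)
  finally show ?thesis unfolding GT_def using tuples_Cons[OF assms] by auto
qed

lemma GT_Suc:
  assumes n: "n \<ge> 1" and dom: "dominant (Suc n) lam"
  shows "GT (Suc n) lam = (\<Union>mu\<in>{mu. interlace lam mu}. Cons mu ` GT n mu)"
proof (safe)
  fix ls assume ls: "ls \<in> GT (Suc n) lam"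
  then have "length ls = n" by (simp add: GT_def tuples_def)
  then obtain mu rest where e: "ls = mu # rest" using n by (cases ls) auto
  show "ls \<in> (\<Union>mu\<in>{mu. interlace lam mu}. Cons mu ` GT n mu)"
    using ls GT_Cons[OF n] unfolding e by auto
next
  fix mu rest assume "interlace lam mu" "rest \<in> GT n mu"
  thus "mu # rest \<in> GT (Suc n) lam" using GT_Cons[OF n] interlace_dom[OF dom] by auto
qed

lemma Bm_restrict: "Bm n (restrict f {..<n}) = Bm n f"
  unfolding Bm_def by (rule eq_matI) auto

lemma interlace_bij:
  assumes len: "length lam = Suc n"
  shows "bij_betw (\<lambda>mu. restrict (yv mu) {..<n}) {mu. interlace lam mu} (PiE {..<n} (\<lambda>i. {yv lam i..<yv lam (Suc i)}))"
proof (rule bij_betw_imageI)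
  show "inj_on (\<lambda>mu. restrict (yv mu) {..<n}) {mu. interlace lam mu}"
  proof (rule inj_onI)
    fix mu mu' assume m: "mu \<in> {mu. interlace lam mu}" "mu' \<in> {mu. interlace lam mu}"
      and e: "restrict (yv mu) {..<n} = restrict (yv mu') {..<n}"
    have l: "length mu = n" "length mu' = n" using m len by (auto simp: interlace_def)
    have "mu ! i = mu' ! i" if "i < n" for i
      using fun_cong[OF e, of i] that by (simp add: yv_def)
    thus "mu = mu'" using l by (intro nth_equalityI) auto
  qed
  show "(\<lambda>mu. restrict (yv mu) {..<n}) ` {mu. interlace lam mu} = PiE {..<n} (\<lambda>i. {yv lam i..<yv lam (Suc i)})"
  proof (rule equalityI)
    show "(\<lambda>mu. restrict (yv mu) {..<n}) ` {mu. interlace lam mu} \<subseteq> PiE {..<n} (\<lambda>i. {yv lam i..<yv lam (Suc i)})"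
    proof (rule image_subsetI)
      fix mu assume "mu \<in> {mu. interlace lam mu}"
      hence il: "interlace lam mu" by simp
      show "restrict (yv mu) {..<n} \<in> PiE {..<n} (\<lambda>i. {yv lam i..<yv lam (Suc i)})"
      proof (subst restrict_PiE_iff, intro ballI)
        fix i assume "i \<in> {..<n}"
        hence i: "i < length mu" using il len by (simp add: interlace_def)
        have "lam ! Suc i \<le> mu ! i" "mu ! i \<le> lam ! i" using il i by (auto simp: interlace_def)
        thus "yv mu i \<in> {yv lam i..<yv lam (Suc i)}" by (simp add: yv_def)
      qed
    qed
  next
    show "PiE {..<n} (\<lambda>i. {yv lam i..<yv lam (Suc i)}) \<subseteq> (\<lambda>mu. restrict (yv mu) {..<n}) ` {mu. interlace lam mu}"
    proof
    fix z assume z: "z \<in> PiE {..<n} (\<lambda>i. {yv lam i..<yv lam (Suc i)})"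
    define mu where "mu = map (\<lambda>i. int i - z i) [0..<n]"
    have zi: "yv lam i \<le> z i \<and> z i < yv lam (Suc i)" if "i < n" for i using PiE_mem[OF z, of i] that by simp
    have "interlace lam mu"
      unfolding interlace_def
    proof (intro conjI allI impI)
      show "length lam = Suc (length mu)" using len by (simp add: mu_def)
      fix i assume "i < length mu"
      hence i: "i < n" by (simp add: mu_def)
      have m: "mu ! i = int i - z i" using i by (simp add: mu_def)
      show "lam ! Suc i \<le> mu ! i" using zi[OF i] unfolding m yv_def by linarith
      show "mu ! i \<le> lam ! i" using zi[OF i] unfolding m yv_def by linarith
    qed
    moreover have "restrict (yv mu) {..<n} = z"
    proof
      fix i show "restrict (yv mu) {..<n} i = z i"
      proof (cases "i < n")
        case True then show ?thesis by (simp add: mu_def yv_def)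
      next
        case False then show ?thesis using PiE_arb[OF z, of i] by simp
      qed
    qed
    ultimately show "z \<in> (\<lambda>mu. restrict (yv mu) {..<n}) ` {mu. interlace lam mu}"
      by (intro image_eqI[where x = mu]) auto
    qed
  qed
qed

lemma count_GT:
  assumes "N \<ge> 1" "dominant N lam"
  shows "of_nat (card (GT N lam)) = det (Bm N (yv lam))"
  using assms
proof (induction N arbitrary: lam)
  case 0 then show ?case by simp
next
  case (Suc n)
  show ?case
  proof (cases "n = 0")
    case True
    have "GT (Suc n) lam = {[]}" using True by (auto simp: GT_def tuples_def)
    moreover have "det (Bm 1 (yv lam)) = 1" by (subst det_single) (auto simp: Bm_def)
    ultimately show ?thesis using True by simp
  next
    case False
    hence n: "n \<ge> 1" by simp
    have len: "length lam = Suc n" using Suc.prems by (simp add: dominant_def)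
    let ?I = "{mu. interlace lam mu}"
    let ?Z = "PiE {..<n} (\<lambda>i. {yv lam i..<yv lam (Suc i)})"
    have bij: "bij_betw (\<lambda>mu. restrict (yv mu) {..<n}) ?I ?Z" by (rule interlace_bij[OF len])
    have fI: "finite ?I" using bij_betw_finite[OF bij] by (simp add: finite_PiE)
    have domI: "\<And>mu. mu \<in> ?I \<Longrightarrow> dominant n mu" using interlace_dom[OF Suc.prems(2)] by blast
    have "card (GT (Suc n) lam) = (\<Sum>mu\<in>?I. card (Cons mu ` GT n mu))"
      unfolding GT_Suc[OF n Suc.prems(2)]
      by (rule card_UN_disjoint) (use fI finite_GT[OF n] domI in auto)
    also have "\<dots> = (\<Sum>mu\<in>?I. card (GT n mu))"
      by (intro sum.cong refl card_image) auto
    finally have "of_nat (card (GT (Suc n) lam)) = (\<Sum>mu\<in>?I. (of_nat (card (GT n mu)) :: rat))" by simp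
    also have "\<dots> = (\<Sum>mu\<in>?I. det (Bm n (yv mu)))"
      by (intro sum.cong refl Suc.IH[OF n domI])
    also have "\<dots> = (\<Sum>mu\<in>?I. det (Bm n (restrict (yv mu) {..<n})))" by (simp add: Bm_restrict)
    also have "\<dots> = (\<Sum>z\<in>?Z. det (Bm n z))" by (rule sum.reindex_bij_betw[OF bij])
    also have "\<dots> = det (Bm (Suc n) (yv lam))"
    proof (rule branch_det)
      fix i assume "i < n"
      then have "lam ! Suc i \<le> lam ! i" using Suc.prems(2) by (auto simp: dominant_def sorted_wrt_iff_nth_less)
      thus "yv lam i \<le> yv lam (Suc i)" by (simp add: yv_def)
    qed
    finally show ?thesis .
  qed
qed

lemma dimV_det:
  assumes "dominant N lam"
  shows "dimV lam = det (Bm N (yv lam))"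
proof -
  have len: "length lam = N" using assms by (simp add: dominant_def)
  have F: "(\<Prod>j<N. (\<Prod>i<j. of_int (int j - int i))) = (\<Prod>j<N. (fact j :: rat))"
    by (intro prod.cong refl prod_sum_fact)
  have "dimV lam = (\<Prod>j<N. (\<Prod>i<j. of_int (yv lam j - yv lam i)) / (\<Prod>i<j. of_int (int j - int i)))"
    unfolding dimV_def Let_def len
  proof (intro prod.cong refl)
    fix j assume "j \<in> {..<N}"
    have e: "\<And>i. lam ! i - lam ! j + int j - int i = yv lam j - yv lam i" by (simp add: yv_def)
    show "(\<Prod>i<j. of_int (lam ! i - lam ! j + int j - int i) / of_int (int j - int i)) =
        (\<Prod>i<j. of_int (yv lam j - yv lam i)) / (\<Prod>i<j. of_int (int j - int i) :: rat)"
      unfolding e by (rule prod_dividef)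
  qed
  also have "\<dots> = (\<Prod>j<N. (\<Prod>i<j. of_int (yv lam j - yv lam i))) / (\<Prod>j<N. (fact j :: rat))"
    by (subst prod_dividef) (simp only: F)
  also have "\<dots> = det (Bm N (yv lam))" by (simp add: vdm_binom)
  finally show ?thesis .
qed


definition intfps :: "rat fps \<Rightarrow> bool" where
  "intfps f \<longleftrightarrow> (\<forall>n. fps_nth f n \<in> \<int>) \<and> fps_nth f 0 = 1"

lemma intfps_1: "intfps 1"
  by (simp add: intfps_def)

lemma intfps_mult: "intfps f \<Longrightarrow> intfps g \<Longrightarrow> intfps (f * g)"
  unfolding intfps_def by (auto simp: fps_mult_nth intro!: Ints_sum Ints_mult)

lemma frc_Ints:
  assumes "a \<in> \<int>" "\<And>i. fps_nth f i \<in> \<int>"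
  shows "fps_right_inverse_constructor f a n \<in> \<int>"
proof (induction n rule: less_induct)
  case (less n)
  show ?case
  proof (cases n)
    case 0 then show ?thesis using assms by simp
  next
    case (Suc m)
    have "fps_right_inverse_constructor f a n = - a * (\<Sum>i\<in>{1..n}. fps_nth f i * fps_right_inverse_constructor f a (n - i))"
      using Suc by simp
    also have "\<dots> \<in> \<int>"
      using assms less Suc by (intro Ints_mult Ints_minus Ints_sum) auto
    finally show ?thesis .
  qed
qed

lemma intfps_inverse: "intfps f \<Longrightarrow> intfps (inverse f)"
  unfolding intfps_def fps_inverse_def by (auto intro!: frc_Ints)

lemma intfps_geom: "s \<ge> 1 \<Longrightarrow> intfps (inverse (1 - fps_X ^ (2 * s)))"
  by (intro intfps_inverse) (auto simp: intfps_def)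

lemma intfps_prod: "(\<And>a. a \<in> A \<Longrightarrow> intfps (f a)) \<Longrightarrow> intfps (prod f A)"
proof (induction A rule: infinite_finite_induct)
  case (infinite A) then show ?case by (simp add: intfps_1)
next
  case empty then show ?case by (simp add: intfps_1)
next
  case (insert x F) then show ?case by (simp add: intfps_mult)
qed

lemma intfps_P_GL: "intfps (P_GL mu)"
  unfolding P_GL_def by (intro intfps_prod intfps_geom) auto

theorem mainTheorem11:
  fixes lam :: "int list" and N :: nat
  assumes "N \<ge> 1" and "dominant N lam"
  defines "d \<equiv> int (N - 1) * size_cw lam - 2 * n_cw lam"
  shows "(\<forall>k. finite {ls\<in>tuples N. twoDelta lam ls \<le> k})
       \<and> (\<forall>k. P_coeff lam k \<in> \<int>)
       \<and> (\<forall>k<d. P_coeff lam k = 0)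
       \<and> P_coeff lam d = dimV lam"
proof -
  have len: "length lam = N" using assms(2) by (simp add: dominant_def)
  have dV: "d = Vs lam" using dominant_Vs[OF assms(2)] by (simp add: d_def)
  have ip: "intfps (\<Prod>j\<in>{1..N-1}. P_GL (ls ! (j - 1)))" for ls
    by (intro intfps_prod intfps_P_GL)
  have A: "\<forall>k. finite {ls\<in>tuples N. twoDelta lam ls \<le> k}"
    using finite_tuples_le[OF assms(1,2)] by blast
  have B: "\<forall>k. P_coeff lam k \<in> \<int>"
    unfolding P_coeff_def Let_def len using ip by (auto simp: intfps_def intro!: Ints_sum)
  have C: "\<forall>k<d. P_coeff lam k = 0"
  proof (intro allI impI)
    fix k assume k: "k < d"
    have E: "{ls\<in>tuples N. twoDelta lam ls \<le> k} = {}"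
      using td_ge[OF assms(1,2)] k dV by force
    show "P_coeff lam k = 0" unfolding P_coeff_def Let_def len E by simp
  qed
  have D: "P_coeff lam d = dimV lam"
  proof -
    have S: "{ls\<in>tuples N. twoDelta lam ls \<le> d} = GT N lam"
      using GT_eq[OF assms(1,2)] dV by simp
    have "P_coeff lam d = (\<Sum>ls\<in>GT N lam. fps_nth (\<Prod>j\<in>{1..N-1}. P_GL (ls ! (j - 1))) (nat (d - twoDelta lam ls)))"
      unfolding P_coeff_def Let_def len S ..
    also have "\<dots> = (\<Sum>ls\<in>GT N lam. 1)"
    proof (intro sum.cong refl)
      fix ls assume ls: "ls \<in> GT N lam"
      hence "ls \<in> tuples N" "twoDelta lam ls \<le> d" using S by auto
      hence "twoDelta lam ls = d" using td_ge[OF assms(1,2)] dV by force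
      thus "fps_nth (\<Prod>j\<in>{1..N-1}. P_GL (ls ! (j - 1))) (nat (d - twoDelta lam ls)) = 1"
        using ip[of ls] by (simp add: intfps_def)
    qed
    also have "\<dots> = of_nat (card (GT N lam))" by simp
    also have "\<dots> = det (Bm N (yv lam))" by (rule count_GT[OF assms(1,2)])
    also have "\<dots> = dimV lam" by (rule dimV_det[OF assms(2), symmetric])
    finally show ?thesis .
  qed
  show ?thesis using A B C D by blast
qed


end
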